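(* There exists a family of bijections $\sigma_{\ell_1,\ell_2}:D_{\ell_1,\ell_2}\to\{1,\dots,\ell_1+\ell_2\}$, indexed by all pairs of non-negative integers $(\ell_1,\ell_2)$, where $D_{\ell_1,\ell_2}=\{(i,j): i\in\{1,2\},\ 1\le j\le \ell_i\}$, and an absolute constant $C$, such that for all $\ell_1,\ell_2\ge 0$ with $L=\ell_1+\ell_2$: the number of elements of $D_{\ell_1,\ell_2}$ whose image under $\sigma_{\ell_1+1,\ell_2}$ differs from their image under $\sigma_{\ell_1,\ell_2}$ is at most $C\log(L+2)$, and likewise with $\sigma_{\ell_1,\ell_2+1}$ in place of $\sigma_{\ell_1+1,\ell_2}$.
   Context: Interpretation: $(i,j)$ denotes the $j$-th word of the $i$-th of two variable-length memories, and $\sigma_{\ell_1,\ell_2}(i,j)$ its position in a combined memory of $\ell_1+\ell_2$ words; the bijection depends only on the two sizes, and incrementing one size (an allocation) or decrementing it (a release, which is the reverse transition) should relocate few words. *)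

theory Defs
  imports Complex_Main
begin

definition D :: "nat \<Rightarrow> nat \<Rightarrow> (nat \<times> nat) set" where
  "D l1 l2 = {(i, j). (i = 1 \<and> 1 \<le> j \<and> j \<le> l1) \<or> (i = 2 \<and> 1 \<le> j \<and> j \<le> l2)}"

end

theory Submission imports Defs "HOL-Library.Log_Nat" begin

lemma term_aux: "odd (l1::nat) \<Longrightarrow> odd l2 \<Longrightarrow> Suc (l1 div 2 + l2 div 2) < l1 + l2"
  by (auto elim!: oddE)

function sg :: "nat \<Rightarrow> nat \<Rightarrow> nat \<Rightarrow> nat \<Rightarrow> nat" where
 "sg l1 l2 i j = (if l1 + l2 \<le> 1 then 1 else
   (if odd l1 \<and> odd l2 \<and> i = 1 \<and> j = l1 then 2 * sg (l1 div 2 + 1) (l2 div 2) 1 ((l1+1) div 2)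
    else if odd j then 2 * sg ((l1+1) div 2 - (if odd l1 \<and> odd l2 then 1 else 0)) ((l2+1) div 2) i ((j+1) div 2) - 1
    else 2 * sg (l1 div 2 + (if odd l1 \<and> odd l2 then 1 else 0)) (l2 div 2) i (j div 2)))"
  by pat_completeness auto
termination
  by (relation "measure (\<lambda>(l1,l2,i,j). l1+l2)") (auto simp: term_aux)

declare sg.simps[simp del]

lemma sg_base: "l1 + l2 \<le> 1 \<Longrightarrow> sg l1 l2 i j = 1"
  by (simp add: sg.simps)

lemma sg_ee_o: "1 \<le> a + b \<Longrightarrow> sg (2*a) (2*b) i (2*v+1) = 2 * sg a b i (v+1) - 1"
  by (subst sg.simps) (auto; presburger)
lemma sg_ee_e: "1 \<le> a + b \<Longrightarrow> sg (2*a) (2*b) i (2*v+2) = 2 * sg a b i (v+1)"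
  by (subst sg.simps) (auto; presburger)
lemma sg_oe_o: "1 \<le> a + b \<Longrightarrow> sg (2*a+1) (2*b) i (2*v+1) = 2 * sg (a+1) b i (v+1) - 1"
  by (subst sg.simps) (auto; presburger)
lemma sg_oe_e: "1 \<le> a + b \<Longrightarrow> sg (2*a+1) (2*b) i (2*v+2) = 2 * sg a b i (v+1)"
  by (subst sg.simps) (auto; presburger)
lemma sg_eo_o: "1 \<le> a + b \<Longrightarrow> sg (2*a) (2*b+1) i (2*v+1) = 2 * sg a (b+1) i (v+1) - 1"
  by (subst sg.simps) (auto; presburger)
lemma sg_eo_e: "1 \<le> a + b \<Longrightarrow> sg (2*a) (2*b+1) i (2*v+2) = 2 * sg a b i (v+1)"
  by (subst sg.simps) (auto; presburger)
lemma sg_oo_o: "sg (2*a+1) (2*b+1) i (2*v+1) = (if i = 1 \<and> v = a then 2 * sg (a+1) b 1 (a+1) else 2 * sg a (b+1) i (v+1) - 1)"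
  by (subst sg.simps) (auto; presburger)
lemma sg_oo_e: "sg (2*a+1) (2*b+1) i (2*v+2) = 2 * sg (a+1) b i (v+1)"
  by (subst sg.simps) (auto; presburger)

lemma D_mem: "(i,j) \<in> D l1 l2 \<longleftrightarrow> (i = 1 \<and> 1 \<le> j \<and> j \<le> l1) \<or> (i = 2 \<and> 1 \<le> j \<and> j \<le> l2)"
  by (simp add: D_def)

lemma D_eq: "D l1 l2 = Pair 1 ` {1..l1} \<union> Pair 2 ` {1..l2}"
  by (auto simp: D_def)

lemma finite_D[simp]: "finite (D l1 l2)"
  by (simp add: D_eq)

lemma card_D: "card (D l1 l2) = l1 + l2"
proof -
  have "card (Pair 1 ` {1..l1} \<union> Pair 2 ` {1..l2} :: (nat\<times>nat) set) = card (Pair 1 ` {1..l1} :: (nat\<times>nat) set) + card (Pair 2 ` {1..l2} :: (nat\<times>nat) set)"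
    by (rule card_Un_disjoint) auto
  also have "\<dots> = l1 + l2" by (simp add: card_image inj_on_def)
  finally show ?thesis by (simp add: D_eq)
qed

definition kk :: "nat \<Rightarrow> nat \<Rightarrow> bool" where "kk l1 l2 = (odd l1 \<and> odd l2)"
definition cls :: "nat \<Rightarrow> nat \<Rightarrow> nat \<Rightarrow> nat \<Rightarrow> bool" where
  "cls l1 l2 i j = ((kk l1 l2 \<and> i = 1 \<and> j = l1) \<or> even j)"
definition lab :: "nat \<Rightarrow> nat \<Rightarrow> nat \<Rightarrow> nat \<Rightarrow> nat" where
  "lab l1 l2 i j = (if kk l1 l2 \<and> i = 1 \<and> j = l1 then (l1+1) div 2 else if odd j then (j+1) div 2 else j div 2)"
definition op1 where "op1 l1 l2 = (l1+1) div 2 - (if kk l1 l2 then 1 else 0)"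
definition op2 where "op2 (l1::nat) (l2::nat) = (l2+1) div 2"
definition ep1 where "ep1 l1 l2 = l1 div 2 + (if kk l1 l2 then 1 else 0)"
definition ep2 where "ep2 (l1::nat) (l2::nat) = l2 div 2"

lemma sg_gen: "2 \<le> l1 + l2 \<Longrightarrow> sg l1 l2 i j = (if cls l1 l2 i j then 2 * sg (ep1 l1 l2) (ep2 l1 l2) i (lab l1 l2 i j)
   else 2 * sg (op1 l1 l2) (op2 l1 l2) i (lab l1 l2 i j) - 1)"
  by (subst sg.simps) (auto simp: cls_def lab_def kk_def op1_def op2_def ep1_def ep2_def)

lemma sizes: "2 \<le> l1 + l2 \<Longrightarrow> op1 l1 l2 + op2 l1 l2 < l1 + l2 \<and> ep1 l1 l2 + ep2 l1 l2 < l1 + l2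
   \<and> 2 * (op1 l1 l2 + op2 l1 l2) \<le> l1 + l2 + 1 \<and> 2 * (ep1 l1 l2 + ep2 l1 l2) \<le> l1 + l2"
  by (auto simp: kk_def op1_def op2_def ep1_def ep2_def elim!: oddE evenE)

lemma lab_mem: "(i,j) \<in> D l1 l2 \<Longrightarrow> (i, lab l1 l2 i j) \<in> (if cls l1 l2 i j then D (ep1 l1 l2) (ep2 l1 l2) else D (op1 l1 l2) (op2 l1 l2))"
  by (auto simp: D_def cls_def lab_def kk_def op1_def op2_def ep1_def ep2_def elim!: oddE evenE)

lemma lab_inj: "(i,j) \<in> D l1 l2 \<Longrightarrow> (i',j') \<in> D l1 l2 \<Longrightarrow> cls l1 l2 i j = cls l1 l2 i' j'
  \<Longrightarrow> lab l1 l2 i j = lab l1 l2 i' j' \<Longrightarrow> i = i' \<Longrightarrow> j = j'"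
  by (auto simp: D_def cls_def lab_def kk_def split: if_splits elim!: oddE evenE)

lemma odd_2m1: "1 \<le> (v::nat) \<Longrightarrow> odd (2*v-1)" by presburger

lemma bij_aux: "\<forall>l1 l2. l1 + l2 = L \<longrightarrow> (\<forall>x\<in>D l1 l2. sg l1 l2 (fst x) (snd x) \<in> {1..L}) \<and> inj_on (\<lambda>x. sg l1 l2 (fst x) (snd x)) (D l1 l2)"
proof (induction L rule: less_induct)
  case (less L)
  show ?case
  proof (intro allI impI)
    fix l1 l2 assume L: "l1 + l2 = L"
    show "(\<forall>x\<in>D l1 l2. sg l1 l2 (fst x) (snd x) \<in> {1..L}) \<and> inj_on (\<lambda>x. sg l1 l2 (fst x) (snd x)) (D l1 l2)"
    proof (cases "L \<le> 1")
      case True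
      have "card (D l1 l2) \<le> 1" using True L by (simp add: card_D)
      then have "\<forall>a\<in>D l1 l2. \<forall>b\<in>D l1 l2. a = b" using card_le_Suc0_iff_eq[of "D l1 l2"] by simp
      then have "inj_on (\<lambda>x. sg l1 l2 (fst x) (snd x)) (D l1 l2)"
        unfolding inj_on_def by blast
      moreover have "\<forall>x\<in>D l1 l2. sg l1 l2 (fst x) (snd x) \<in> {1..L}"
        using True L by (auto simp: sg_base D_def)
      ultimately show ?thesis by blast
    next
      case False
      then have L2: "2 \<le> l1 + l2" using L by simp
      note sz = sizes[OF L2]
      have IHo: "(\<forall>x\<in>D (op1 l1 l2) (op2 l1 l2). sg (op1 l1 l2) (op2 l1 l2) (fst x) (snd x) \<in> {1..op1 l1 l2 + op2 l1 l2}) \<and> inj_on (\<lambda>x. sg (op1 l1 l2) (op2 l1 l2) (fst x) (snd x)) (D (op1 l1 l2) (op2 l1 l2))"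
        using less[of "op1 l1 l2 + op2 l1 l2"] sz L by blast
      have IHe: "(\<forall>x\<in>D (ep1 l1 l2) (ep2 l1 l2). sg (ep1 l1 l2) (ep2 l1 l2) (fst x) (snd x) \<in> {1..ep1 l1 l2 + ep2 l1 l2}) \<and> inj_on (\<lambda>x. sg (ep1 l1 l2) (ep2 l1 l2) (fst x) (snd x)) (D (ep1 l1 l2) (ep2 l1 l2))"
        using less[of "ep1 l1 l2 + ep2 l1 l2"] sz L by blast
      have rng: "sg l1 l2 i j \<in> {1..L}" if "(i,j) \<in> D l1 l2" for i j
      proof (cases "cls l1 l2 i j")
        case True
        then have "(i, lab l1 l2 i j) \<in> D (ep1 l1 l2) (ep2 l1 l2)" using lab_mem[OF that] by simp
        then have "sg (ep1 l1 l2) (ep2 l1 l2) i (lab l1 l2 i j) \<in> {1..ep1 l1 l2 + ep2 l1 l2}" using IHe by fastforce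
        then show ?thesis using True sg_gen[OF L2, of i j] sz L by auto
      next
        case False
        then have "(i, lab l1 l2 i j) \<in> D (op1 l1 l2) (op2 l1 l2)" using lab_mem[OF that] by simp
        then have "sg (op1 l1 l2) (op2 l1 l2) i (lab l1 l2 i j) \<in> {1..op1 l1 l2 + op2 l1 l2}" using IHo by fastforce
        then show ?thesis using False sg_gen[OF L2, of i j] sz L by auto
      qed
      have inj: "(i,j) = (i',j')" if xy: "(i,j) \<in> D l1 l2" "(i',j') \<in> D l1 l2" and eq: "sg l1 l2 i j = sg l1 l2 i' j'" for i j i' j'
      proof -
        have c: "cls l1 l2 i j = cls l1 l2 i' j'"
        proof (rule ccontr)
          assume ne: "cls l1 l2 i j \<noteq> cls l1 l2 i' j'"
          have "odd (sg l1 l2 i j) \<noteq> odd (sg l1 l2 i' j')"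
          proof -
            have pos: "sg (op1 l1 l2) (op2 l1 l2) a b \<ge> 1" if "(a,b) \<in> D (op1 l1 l2) (op2 l1 l2)" for a b
              using IHo that by fastforce
            have p1: "odd (sg l1 l2 a b) \<longleftrightarrow> \<not> cls l1 l2 a b" if "(a,b) \<in> D l1 l2" for a b
            proof (cases "cls l1 l2 a b")
              case True then show ?thesis using sg_gen[OF L2, of a b] by simp
            next
              case False
              then have "(a, lab l1 l2 a b) \<in> D (op1 l1 l2) (op2 l1 l2)" using lab_mem[OF that] by simp
              then have "sg (op1 l1 l2) (op2 l1 l2) a (lab l1 l2 a b) \<ge> 1" by (rule pos)
              then show ?thesis using False sg_gen[OF L2, of a b] by (simp add: odd_2m1)  
            qed
            show ?thesis using p1[OF xy(1)] p1[OF xy(2)] ne by simp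
          qed
          then show False using eq by simp
        qed
        have ii0: "(i, lab l1 l2 i j) = (i', lab l1 l2 i' j')"
        proof (cases "cls l1 l2 i j")
          case True
          have m: "(i, lab l1 l2 i j) \<in> D (ep1 l1 l2) (ep2 l1 l2)" "(i', lab l1 l2 i' j') \<in> D (ep1 l1 l2) (ep2 l1 l2)"
            using lab_mem[OF xy(1)] lab_mem[OF xy(2)] True c by auto
          have "sg (ep1 l1 l2) (ep2 l1 l2) i (lab l1 l2 i j) = sg (ep1 l1 l2) (ep2 l1 l2) i' (lab l1 l2 i' j')"
            using eq sg_gen[OF L2, of i j] sg_gen[OF L2, of i' j'] True c by simp
          then show ?thesis using IHe m unfolding inj_on_def by fastforce
        next
          case False
          have m: "(i, lab l1 l2 i j) \<in> D (op1 l1 l2) (op2 l1 l2)" "(i', lab l1 l2 i' j') \<in> D (op1 l1 l2) (op2 l1 l2)"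
            using lab_mem[OF xy(1)] lab_mem[OF xy(2)] False c by auto
          have pos: "sg (op1 l1 l2) (op2 l1 l2) a b \<ge> 1" if "(a,b) \<in> D (op1 l1 l2) (op2 l1 l2)" for a b
            using IHo that by fastforce
          have "sg (op1 l1 l2) (op2 l1 l2) i (lab l1 l2 i j) = sg (op1 l1 l2) (op2 l1 l2) i' (lab l1 l2 i' j')"
            using eq sg_gen[OF L2, of i j] sg_gen[OF L2, of i' j'] False c pos[OF m(1)] pos[OF m(2)] by simp
          then show ?thesis using IHo m unfolding inj_on_def by fastforce
        qed
        then have ii: "i = i'" by simp
        then have "j = j'" using lab_inj[OF xy c] ii0 by blast
        then show ?thesis using ii by simp
      qed
      show ?thesis using rng inj unfolding inj_on_def by fastforce
    qed
  qed
qed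

lemma bij_sg: "bij_betw (\<lambda>x. sg l1 l2 (fst x) (snd x)) (D l1 l2) {1..l1+l2}"
proof -
  have a: "\<forall>x\<in>D l1 l2. sg l1 l2 (fst x) (snd x) \<in> {1..l1+l2}" and b: "inj_on (\<lambda>x. sg l1 l2 (fst x) (snd x)) (D l1 l2)"
    using bij_aux[of "l1+l2"] by auto
  have "(\<lambda>x. sg l1 l2 (fst x) (snd x)) ` D l1 l2 = {1..l1+l2}"
  proof (rule card_subset_eq)
    show "finite {1..l1+l2}" by simp
    show "(\<lambda>x. sg l1 l2 (fst x) (snd x)) ` D l1 l2 \<subseteq> {1..l1+l2}" using a by auto
    show "card ((\<lambda>x. sg l1 l2 (fst x) (snd x)) ` D l1 l2) = card {1..l1+l2}"
      using card_image[OF b] by (simp add: card_D)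
  qed
  then show ?thesis using b by (simp add: bij_betw_def)
qed

lemma frame:
  fixes E Bo Be A :: "(nat \<times> nat) set" and f g :: "nat \<Rightarrow> nat \<Rightarrow> nat"
  assumes fE: "finite E" and fo: "finite Bo" and fe: "finite Be"
    and od: "\<And>i v. (i, 2*v+1) \<in> A \<Longrightarrow> (i, 2*v+1) \<notin> E \<Longrightarrow> f i (2*v+1) \<noteq> g i (2*v+1) \<Longrightarrow> (i, v+1) \<in> Bo"
    and ev: "\<And>i v. (i, 2*v+2) \<in> A \<Longrightarrow> (i, 2*v+2) \<notin> E \<Longrightarrow> f i (2*v+2) \<noteq> g i (2*v+2) \<Longrightarrow> (i, v+1) \<in> Be"
    and pos: "\<And>i j. (i,j) \<in> A \<Longrightarrow> 1 \<le> j"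
  shows "card {x \<in> A. f (fst x) (snd x) \<noteq> g (fst x) (snd x)} \<le> card Bo + card Be + card E"
proof -
  have sub: "{x \<in> A. f (fst x) (snd x) \<noteq> g (fst x) (snd x)} \<subseteq> (\<lambda>(i,v). (i, 2*v-1)) ` Bo \<union> (\<lambda>(i,v). (i, 2*v)) ` Be \<union> E"
  proof
    fix x assume x: "x \<in> {x \<in> A. f (fst x) (snd x) \<noteq> g (fst x) (snd x)}"
    obtain i j where xij: "x = (i,j)" by (cases x)
    show "x \<in> (\<lambda>(i,v). (i, 2*v-1)) ` Bo \<union> (\<lambda>(i,v). (i, 2*v)) ` Be \<union> E"
    proof (cases "x \<in> E")
      case True then show ?thesis by simp
    next
      case nE: False
      have A: "(i,j) \<in> A" and ne: "f i j \<noteq> g i j" using x xij by auto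
      have j1: "1 \<le> j" using pos[OF A] .
      show ?thesis
      proof (cases "odd j")
        case True
        then obtain v where v: "j = 2*v+1" by (rule oddE)
        have "(i, v+1) \<in> Bo" using od[of i v] A nE ne xij v by simp
        moreover have "x = (\<lambda>(i,v). (i, 2*v-1)) (i, v+1)" using xij v by simp
        ultimately show ?thesis by blast
      next
        case False
        then obtain w where w: "j = 2*w" by (auto elim: evenE)
        then obtain v where v: "j = 2*v+2" using j1 by (cases w) auto
        have "(i, v+1) \<in> Be" using ev[of i v] A nE ne xij v by simp
        moreover have "x = (\<lambda>(i,v). (i, 2*v)) (i, v+1)" using xij v by simp
        ultimately show ?thesis by blast
      qed
    qed
  qed
  have "card {x \<in> A. f (fst x) (snd x) \<noteq> g (fst x) (snd x)} \<le> card ((\<lambda>(i,v). (i, 2*v-1)) ` Bo \<union> (\<lambda>(i,v). (i, 2*v)) ` Be \<union> E)"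
    by (rule card_mono[OF _ sub]) (use fE fo fe in auto)
  also have "\<dots> \<le> card ((\<lambda>(i,v). (i, 2*v-1)) ` Bo) + card ((\<lambda>(i,v). (i, 2*v)) ` Be) + card E"
    by (meson add_mono_thms_linordered_semiring(3) card_Un_le le_trans)
  also have "\<dots> \<le> card Bo + card Be + card E"
    using card_image_le[OF fo] card_image_le[OF fe] by (meson add_le_mono le_refl)
  finally show ?thesis .
qed

definition S1 where "S1 a b = {x \<in> D a b. sg (a+1) b (fst x) (snd x) \<noteq> sg a b (fst x) (snd x)}"
definition S2 where "S2 a b = {x \<in> D a b. sg a (b+1) (fst x) (snd x) \<noteq> sg a b (fst x) (snd x)}"
definition ST where "ST a b = {x \<in> D a b. sg (a+1) b (fst x) (snd x) \<noteq> sg a (b+1) (fst x) (snd x)}"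

lemma fin_S[simp]: "finite (S1 a b)" "finite (S2 a b)" "finite (ST a b)"
  by (auto simp: S1_def S2_def ST_def)

lemmas defs = cls_def lab_def kk_def op1_def op2_def ep1_def ep2_def D_def S1_def S2_def ST_def



lemma I1_ee: "1 \<le> a + b \<Longrightarrow> card (S1 (2*a) (2*b)) \<le> card (S1 a b)"
proof -
  assume hyp: "1 \<le> a + b"
  have "card {x \<in> D (2*a) (2*b). sg (2*a+1) (2*b) (fst x) (snd x) \<noteq> sg (2*a) (2*b) (fst x) (snd x)} \<le> card (S1 a b) + card ({}::(nat\<times>nat) set) + card ({}::(nat\<times>nat) set)"
  proof (rule frame)
    fix i v assume "(i, 2*v+1) \<in> D (2*a) (2*b)" "(i, 2*v+1) \<notin> ({}::(nat\<times>nat) set)"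
      "sg (2*a+1) (2*b) i (2*v+1) \<noteq> sg (2*a) (2*b) i (2*v+1)"
    then show "(i, v+1) \<in> (S1 a b)"
      using hyp sg_gen[of "2*a+1" "2*b" i "2*v+1"] sg_gen[of "2*a" "2*b" i "2*v+1"] by (auto simp: defs)
  next
    fix i v assume "(i, 2*v+2) \<in> D (2*a) (2*b)" "(i, 2*v+2) \<notin> ({}::(nat\<times>nat) set)"
      "sg (2*a+1) (2*b) i (2*v+2) \<noteq> sg (2*a) (2*b) i (2*v+2)"
    then show "(i, v+1) \<in> ({}::(nat\<times>nat) set)"
      using hyp sg_gen[of "2*a+1" "2*b" i "2*v+2"] sg_gen[of "2*a" "2*b" i "2*v+2"] by (auto simp: defs)
  qed (auto simp: D_def)
  then show ?thesis by (simp add: S1_def)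
qed

lemma I1_oe: "1 \<le> a + b \<Longrightarrow> card (S1 (2*a+1) (2*b)) \<le> card (S1 a b)"
proof -
  assume hyp: "1 \<le> a + b"
  have "card {x \<in> D (2*a+1) (2*b). sg (2*a+1+1) (2*b) (fst x) (snd x) \<noteq> sg (2*a+1) (2*b) (fst x) (snd x)} \<le> card ({}::(nat\<times>nat) set) + card (S1 a b) + card ({}::(nat\<times>nat) set)"
  proof (rule frame)
    fix i v assume "(i, 2*v+1) \<in> D (2*a+1) (2*b)" "(i, 2*v+1) \<notin> ({}::(nat\<times>nat) set)"
      "sg (2*a+1+1) (2*b) i (2*v+1) \<noteq> sg (2*a+1) (2*b) i (2*v+1)"
    then show "(i, v+1) \<in> ({}::(nat\<times>nat) set)"
      using hyp sg_gen[of "2*a+1+1" "2*b" i "2*v+1"] sg_gen[of "2*a+1" "2*b" i "2*v+1"] by (auto simp: defs)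
  next
    fix i v assume "(i, 2*v+2) \<in> D (2*a+1) (2*b)" "(i, 2*v+2) \<notin> ({}::(nat\<times>nat) set)"
      "sg (2*a+1+1) (2*b) i (2*v+2) \<noteq> sg (2*a+1) (2*b) i (2*v+2)"
    then show "(i, v+1) \<in> (S1 a b)"
      using hyp sg_gen[of "2*a+1+1" "2*b" i "2*v+2"] sg_gen[of "2*a+1" "2*b" i "2*v+2"] by (auto simp: defs)
  qed (auto simp: D_def)
  then show ?thesis by (simp add: S1_def)
qed

lemma I1_eo: "1 \<le> a + b \<Longrightarrow> card (S1 (2*a) (2*b+1)) \<le> card (S1 a b)"
proof -
  assume hyp: "1 \<le> a + b"
  have "card {x \<in> D (2*a) (2*b+1). sg (2*a+1) (2*b+1) (fst x) (snd x) \<noteq> sg (2*a) (2*b+1) (fst x) (snd x)} \<le> card ({}::(nat\<times>nat) set) + card (S1 a b) + card ({}::(nat\<times>nat) set)"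
  proof (rule frame)
    fix i v assume "(i, 2*v+1) \<in> D (2*a) (2*b+1)" "(i, 2*v+1) \<notin> ({}::(nat\<times>nat) set)"
      "sg (2*a+1) (2*b+1) i (2*v+1) \<noteq> sg (2*a) (2*b+1) i (2*v+1)"
    then show "(i, v+1) \<in> ({}::(nat\<times>nat) set)"
      using hyp sg_gen[of "2*a+1" "2*b+1" i "2*v+1"] sg_gen[of "2*a" "2*b+1" i "2*v+1"] by (auto simp: defs)
  next
    fix i v assume "(i, 2*v+2) \<in> D (2*a) (2*b+1)" "(i, 2*v+2) \<notin> ({}::(nat\<times>nat) set)"
      "sg (2*a+1) (2*b+1) i (2*v+2) \<noteq> sg (2*a) (2*b+1) i (2*v+2)"
    then show "(i, v+1) \<in> (S1 a b)"
      using hyp sg_gen[of "2*a+1" "2*b+1" i "2*v+2"] sg_gen[of "2*a" "2*b+1" i "2*v+2"] by (auto simp: defs)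
  qed (auto simp: D_def)
  then show ?thesis by (simp add: S1_def)
qed

lemma I1_oo: "card (S1 (2*a+1) (2*b+1)) \<le> card (S1 a (b+1)) + 1"
proof -
  
  have "card {x \<in> D (2*a+1) (2*b+1). sg (2*a+1+1) (2*b+1) (fst x) (snd x) \<noteq> sg (2*a+1) (2*b+1) (fst x) (snd x)} \<le> card (S1 a (b+1)) + card ({}::(nat\<times>nat) set) + card {(1::nat,2*a+1)}"
  proof (rule frame)
    fix i v assume "(i, 2*v+1) \<in> D (2*a+1) (2*b+1)" "(i, 2*v+1) \<notin> {(1::nat,2*a+1)}"
      "sg (2*a+1+1) (2*b+1) i (2*v+1) \<noteq> sg (2*a+1) (2*b+1) i (2*v+1)"
    then show "(i, v+1) \<in> (S1 a (b+1))"
      using  sg_gen[of "2*a+1+1" "2*b+1" i "2*v+1"] sg_gen[of "2*a+1" "2*b+1" i "2*v+1"] by (auto simp: defs)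
  next
    fix i v assume "(i, 2*v+2) \<in> D (2*a+1) (2*b+1)" "(i, 2*v+2) \<notin> {(1::nat,2*a+1)}"
      "sg (2*a+1+1) (2*b+1) i (2*v+2) \<noteq> sg (2*a+1) (2*b+1) i (2*v+2)"
    then show "(i, v+1) \<in> ({}::(nat\<times>nat) set)"
      using  sg_gen[of "2*a+1+1" "2*b+1" i "2*v+2"] sg_gen[of "2*a+1" "2*b+1" i "2*v+2"] by (auto simp: defs)
  qed (auto simp: D_def)
  then show ?thesis by (simp add: S1_def)
qed

lemma I2_ee: "1 \<le> a + b \<Longrightarrow> card (S2 (2*a) (2*b)) \<le> card (S2 a b)"
proof -
  assume hyp: "1 \<le> a + b"
  have "card {x \<in> D (2*a) (2*b). sg (2*a) (2*b+1) (fst x) (snd x) \<noteq> sg (2*a) (2*b) (fst x) (snd x)} \<le> card (S2 a b) + card ({}::(nat\<times>nat) set) + card ({}::(nat\<times>nat) set)"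
  proof (rule frame)
    fix i v assume "(i, 2*v+1) \<in> D (2*a) (2*b)" "(i, 2*v+1) \<notin> ({}::(nat\<times>nat) set)"
      "sg (2*a) (2*b+1) i (2*v+1) \<noteq> sg (2*a) (2*b) i (2*v+1)"
    then show "(i, v+1) \<in> (S2 a b)"
      using hyp sg_gen[of "2*a" "2*b+1" i "2*v+1"] sg_gen[of "2*a" "2*b" i "2*v+1"] by (auto simp: defs)
  next
    fix i v assume "(i, 2*v+2) \<in> D (2*a) (2*b)" "(i, 2*v+2) \<notin> ({}::(nat\<times>nat) set)"
      "sg (2*a) (2*b+1) i (2*v+2) \<noteq> sg (2*a) (2*b) i (2*v+2)"
    then show "(i, v+1) \<in> ({}::(nat\<times>nat) set)"
      using hyp sg_gen[of "2*a" "2*b+1" i "2*v+2"] sg_gen[of "2*a" "2*b" i "2*v+2"] by (auto simp: defs)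
  qed (auto simp: D_def)
  then show ?thesis by (simp add: S2_def)
qed

lemma I2_eo: "1 \<le> a + b \<Longrightarrow> card (S2 (2*a) (2*b+1)) \<le> card (S2 a b)"
proof -
  assume hyp: "1 \<le> a + b"
  have "card {x \<in> D (2*a) (2*b+1). sg (2*a) (2*b+1+1) (fst x) (snd x) \<noteq> sg (2*a) (2*b+1) (fst x) (snd x)} \<le> card ({}::(nat\<times>nat) set) + card (S2 a b) + card ({}::(nat\<times>nat) set)"
  proof (rule frame)
    fix i v assume "(i, 2*v+1) \<in> D (2*a) (2*b+1)" "(i, 2*v+1) \<notin> ({}::(nat\<times>nat) set)"
      "sg (2*a) (2*b+1+1) i (2*v+1) \<noteq> sg (2*a) (2*b+1) i (2*v+1)"
    then show "(i, v+1) \<in> ({}::(nat\<times>nat) set)"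
      using hyp sg_gen[of "2*a" "2*b+1+1" i "2*v+1"] sg_gen[of "2*a" "2*b+1" i "2*v+1"] by (auto simp: defs)
  next
    fix i v assume "(i, 2*v+2) \<in> D (2*a) (2*b+1)" "(i, 2*v+2) \<notin> ({}::(nat\<times>nat) set)"
      "sg (2*a) (2*b+1+1) i (2*v+2) \<noteq> sg (2*a) (2*b+1) i (2*v+2)"
    then show "(i, v+1) \<in> (S2 a b)"
      using hyp sg_gen[of "2*a" "2*b+1+1" i "2*v+2"] sg_gen[of "2*a" "2*b+1" i "2*v+2"] by (auto simp: defs)
  qed (auto simp: D_def)
  then show ?thesis by (simp add: S2_def)
qed

lemma I2_oe: "1 \<le> a + b \<Longrightarrow> card (S2 (2*a+1) (2*b)) \<le> card (ST a b) + card (S1 a b) + 1"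
proof -
  assume hyp: "1 \<le> a + b"
  have "card {x \<in> D (2*a+1) (2*b). sg (2*a+1) (2*b+1) (fst x) (snd x) \<noteq> sg (2*a+1) (2*b) (fst x) (snd x)} \<le> card (ST a b) + card (S1 a b) + card {(1::nat,2*a+1)}"
  proof (rule frame)
    fix i v assume "(i, 2*v+1) \<in> D (2*a+1) (2*b)" "(i, 2*v+1) \<notin> {(1::nat,2*a+1)}"
      "sg (2*a+1) (2*b+1) i (2*v+1) \<noteq> sg (2*a+1) (2*b) i (2*v+1)"
    then show "(i, v+1) \<in> (ST a b)"
      using hyp sg_gen[of "2*a+1" "2*b+1" i "2*v+1"] sg_gen[of "2*a+1" "2*b" i "2*v+1"] by (auto simp: defs)
  next
    fix i v assume "(i, 2*v+2) \<in> D (2*a+1) (2*b)" "(i, 2*v+2) \<notin> {(1::nat,2*a+1)}"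
      "sg (2*a+1) (2*b+1) i (2*v+2) \<noteq> sg (2*a+1) (2*b) i (2*v+2)"
    then show "(i, v+1) \<in> (S1 a b)"
      using hyp sg_gen[of "2*a+1" "2*b+1" i "2*v+2"] sg_gen[of "2*a+1" "2*b" i "2*v+2"] by (auto simp: defs)
  qed (auto simp: D_def)
  then show ?thesis by (simp add: S2_def)
qed

lemma I2_oo: "card (S2 (2*a+1) (2*b+1)) \<le> card (S1 a (b+1)) + card (ST a b) + 1"
proof -
  
  have "card {x \<in> D (2*a+1) (2*b+1). sg (2*a+1) (2*b+1+1) (fst x) (snd x) \<noteq> sg (2*a+1) (2*b+1) (fst x) (snd x)} \<le> card (S1 a (b+1)) + card (ST a b) + card {(1::nat,2*a+1)}"
  proof (rule frame)
    fix i v assume "(i, 2*v+1) \<in> D (2*a+1) (2*b+1)" "(i, 2*v+1) \<notin> {(1::nat,2*a+1)}"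
      "sg (2*a+1) (2*b+1+1) i (2*v+1) \<noteq> sg (2*a+1) (2*b+1) i (2*v+1)"
    then show "(i, v+1) \<in> (S1 a (b+1))"
      using  sg_gen[of "2*a+1" "2*b+1+1" i "2*v+1"] sg_gen[of "2*a+1" "2*b+1" i "2*v+1"] by (auto simp: defs)
  next
    fix i v assume "(i, 2*v+2) \<in> D (2*a+1) (2*b+1)" "(i, 2*v+2) \<notin> {(1::nat,2*a+1)}"
      "sg (2*a+1) (2*b+1+1) i (2*v+2) \<noteq> sg (2*a+1) (2*b+1) i (2*v+2)"
    then show "(i, v+1) \<in> (ST a b)"
      using  sg_gen[of "2*a+1" "2*b+1+1" i "2*v+2"] sg_gen[of "2*a+1" "2*b+1" i "2*v+2"] by (auto simp: defs)
  qed (auto simp: D_def)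
  then show ?thesis by (simp add: S2_def)
qed

lemma IT_ee: "1 \<le> a + b \<Longrightarrow> card (ST (2*a) (2*b)) \<le> card (ST a b)"
proof -
  assume hyp: "1 \<le> a + b"
  have "card {x \<in> D (2*a) (2*b). sg (2*a+1) (2*b) (fst x) (snd x) \<noteq> sg (2*a) (2*b+1) (fst x) (snd x)} \<le> card (ST a b) + card ({}::(nat\<times>nat) set) + card ({}::(nat\<times>nat) set)"
  proof (rule frame)
    fix i v assume "(i, 2*v+1) \<in> D (2*a) (2*b)" "(i, 2*v+1) \<notin> ({}::(nat\<times>nat) set)"
      "sg (2*a+1) (2*b) i (2*v+1) \<noteq> sg (2*a) (2*b+1) i (2*v+1)"
    then show "(i, v+1) \<in> (ST a b)"
      using hyp sg_gen[of "2*a+1" "2*b" i "2*v+1"] sg_gen[of "2*a" "2*b+1" i "2*v+1"] by (auto simp: defs)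
  next
    fix i v assume "(i, 2*v+2) \<in> D (2*a) (2*b)" "(i, 2*v+2) \<notin> ({}::(nat\<times>nat) set)"
      "sg (2*a+1) (2*b) i (2*v+2) \<noteq> sg (2*a) (2*b+1) i (2*v+2)"
    then show "(i, v+1) \<in> ({}::(nat\<times>nat) set)"
      using hyp sg_gen[of "2*a+1" "2*b" i "2*v+2"] sg_gen[of "2*a" "2*b+1" i "2*v+2"] by (auto simp: defs)
  qed (auto simp: D_def)
  then show ?thesis by (simp add: ST_def)
qed

lemma IT_oe: "1 \<le> a + b \<Longrightarrow> card (ST (2*a+1) (2*b)) \<le> card (ST a b) + 1"
proof -
  assume hyp: "1 \<le> a + b"
  have "card {x \<in> D (2*a+1) (2*b). sg (2*a+1+1) (2*b) (fst x) (snd x) \<noteq> sg (2*a+1) (2*b+1) (fst x) (snd x)} \<le> card (ST a b) + card ({}::(nat\<times>nat) set) + card {(1::nat,2*a+1)}"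
  proof (rule frame)
    fix i v assume "(i, 2*v+1) \<in> D (2*a+1) (2*b)" "(i, 2*v+1) \<notin> {(1::nat,2*a+1)}"
      "sg (2*a+1+1) (2*b) i (2*v+1) \<noteq> sg (2*a+1) (2*b+1) i (2*v+1)"
    then show "(i, v+1) \<in> (ST a b)"
      using hyp sg_gen[of "2*a+1+1" "2*b" i "2*v+1"] sg_gen[of "2*a+1" "2*b+1" i "2*v+1"] by (auto simp: defs)
  next
    fix i v assume "(i, 2*v+2) \<in> D (2*a+1) (2*b)" "(i, 2*v+2) \<notin> {(1::nat,2*a+1)}"
      "sg (2*a+1+1) (2*b) i (2*v+2) \<noteq> sg (2*a+1) (2*b+1) i (2*v+2)"
    then show "(i, v+1) \<in> ({}::(nat\<times>nat) set)"
      using hyp sg_gen[of "2*a+1+1" "2*b" i "2*v+2"] sg_gen[of "2*a+1" "2*b+1" i "2*v+2"] by (auto simp: defs)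
  qed (auto simp: D_def)
  then show ?thesis by (simp add: ST_def)
qed

lemma IT_eo: "1 \<le> a + b \<Longrightarrow> card (ST (2*a) (2*b+1)) \<le> card (ST a b)"
proof -
  assume hyp: "1 \<le> a + b"
  have "card {x \<in> D (2*a) (2*b+1). sg (2*a+1) (2*b+1) (fst x) (snd x) \<noteq> sg (2*a) (2*b+1+1) (fst x) (snd x)} \<le> card ({}::(nat\<times>nat) set) + card (ST a b) + card ({}::(nat\<times>nat) set)"
  proof (rule frame)
    fix i v assume "(i, 2*v+1) \<in> D (2*a) (2*b+1)" "(i, 2*v+1) \<notin> ({}::(nat\<times>nat) set)"
      "sg (2*a+1) (2*b+1) i (2*v+1) \<noteq> sg (2*a) (2*b+1+1) i (2*v+1)"
    then show "(i, v+1) \<in> ({}::(nat\<times>nat) set)"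
      using hyp sg_gen[of "2*a+1" "2*b+1" i "2*v+1"] sg_gen[of "2*a" "2*b+1+1" i "2*v+1"] by (auto simp: defs)
  next
    fix i v assume "(i, 2*v+2) \<in> D (2*a) (2*b+1)" "(i, 2*v+2) \<notin> ({}::(nat\<times>nat) set)"
      "sg (2*a+1) (2*b+1) i (2*v+2) \<noteq> sg (2*a) (2*b+1+1) i (2*v+2)"
    then show "(i, v+1) \<in> (ST a b)"
      using hyp sg_gen[of "2*a+1" "2*b+1" i "2*v+2"] sg_gen[of "2*a" "2*b+1+1" i "2*v+2"] by (auto simp: defs)
  qed (auto simp: D_def)
  then show ?thesis by (simp add: ST_def)
qed

lemma IT_oo: "card (ST (2*a+1) (2*b+1)) \<le> card (ST a b)"
proof -
  
  have "card {x \<in> D (2*a+1) (2*b+1). sg (2*a+1+1) (2*b+1) (fst x) (snd x) \<noteq> sg (2*a+1) (2*b+1+1) (fst x) (snd x)} \<le> card ({}::(nat\<times>nat) set) + card (ST a b) + card ({}::(nat\<times>nat) set)"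
  proof (rule frame)
    fix i v assume "(i, 2*v+1) \<in> D (2*a+1) (2*b+1)" "(i, 2*v+1) \<notin> ({}::(nat\<times>nat) set)"
      "sg (2*a+1+1) (2*b+1) i (2*v+1) \<noteq> sg (2*a+1) (2*b+1+1) i (2*v+1)"
    then show "(i, v+1) \<in> ({}::(nat\<times>nat) set)"
      using  sg_gen[of "2*a+1+1" "2*b+1" i "2*v+1"] sg_gen[of "2*a+1" "2*b+1+1" i "2*v+1"] by (auto simp: defs)
  next
    fix i v assume "(i, 2*v+2) \<in> D (2*a+1) (2*b+1)" "(i, 2*v+2) \<notin> ({}::(nat\<times>nat) set)"
      "sg (2*a+1+1) (2*b+1) i (2*v+2) \<noteq> sg (2*a+1) (2*b+1+1) i (2*v+2)"
    then show "(i, v+1) \<in> (ST a b)"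
      using  sg_gen[of "2*a+1+1" "2*b+1" i "2*v+2"] sg_gen[of "2*a+1" "2*b+1+1" i "2*v+2"] by (auto simp: defs)
  qed (auto simp: D_def)
  then show ?thesis by (simp add: ST_def)
qed

lemma S_le: "card (S1 l1 l2) \<le> l1 + l2" "card (S2 l1 l2) \<le> l1 + l2" "card (ST l1 l2) \<le> l1 + l2"
  by (rule order_trans[OF card_mono[of "D l1 l2"]], auto simp: S1_def S2_def ST_def card_D)+

lemma bound: "\<forall>l1 l2::nat. l1 + l2 \<le> 2^n \<longrightarrow> card (S1 l1 l2) \<le> n+1 \<and> card (ST l1 l2) \<le> n+1 \<and> card (S2 l1 l2) \<le> 2*n+2"
proof (induction n)
  case 0
  show ?case
  proof (intro allI impI)
    fix l1 l2 :: nat assume "l1 + l2 \<le> 2^0"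
    then show "card (S1 l1 l2) \<le> 0+1 \<and> card (ST l1 l2) \<le> 0+1 \<and> card (S2 l1 l2) \<le> 2*0+2"
      using S_le[of l1 l2] by simp
  qed
next
  case (Suc n)
  have IH: "card (S1 x y) \<le> n+1 \<and> card (ST x y) \<le> n+1 \<and> card (S2 x y) \<le> 2*n+2" if "x + y \<le> 2^n" for x y :: nat
    using Suc.IH that by blast
  show ?case
  proof (intro allI impI)
    fix l1 l2 :: nat assume L: "l1 + l2 \<le> 2^Suc n"
    show "card (S1 l1 l2) \<le> Suc n+1 \<and> card (ST l1 l2) \<le> Suc n+1 \<and> card (S2 l1 l2) \<le> 2*Suc n+2"
    proof (cases "l1 + l2 \<le> 1")
      case True then show ?thesis using S_le[of l1 l2] by linarith
    next
      case False
      consider (ee) a b where "l1 = 2*a" "l2 = 2*b" | (oe) a b where "l1 = 2*a+1" "l2 = 2*b"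
        | (eo) a b where "l1 = 2*a" "l2 = 2*b+1" | (oo) a b where "l1 = 2*a+1" "l2 = 2*b+1"
        by (metis evenE oddE)
      then show ?thesis
      proof cases
        case ee
        have h: "1 \<le> a + b" using False ee by presburger
        have ab: "a + b \<le> 2^n" using L ee by simp
        show ?thesis using I1_ee[OF h] I2_ee[OF h] IT_ee[OF h] IH[OF ab] ee by simp
      next
        case oe
        have h: "1 \<le> a + b" using False oe by presburger
        have ab: "a + b \<le> 2^n" using L oe by simp
        show ?thesis using I1_oe[OF h] I2_oe[OF h] IT_oe[OF h] IH[OF ab] oe by simp
      next
        case eo
        have h: "1 \<le> a + b" using False eo by presburger
        have ab: "a + b \<le> 2^n" using L eo by simp
        show ?thesis using I1_eo[OF h] I2_eo[OF h] IT_eo[OF h] IH[OF ab] eo by simp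
      next
        case oo
        have ab: "a + (b+1) \<le> 2^n" using L oo by simp
        have ab': "a + b \<le> 2^n" using ab by simp
        have q1: "card (S1 a (b+1)) \<le> n+1" using IH[OF ab] by blast
        have q2: "card (ST a b) \<le> n+1" using IH[OF ab'] by blast
        have r: "card (S1 l1 l2) \<le> card (S1 a (b+1)) + 1" "card (S2 l1 l2) \<le> card (S1 a (b+1)) + card (ST a b) + 1"
          "card (ST l1 l2) \<le> card (ST a b)" using I1_oo[of a b] I2_oo[of a b] IT_oo[of a b] oo by simp_all
        show ?thesis using q1 q2 r by simp
      qed
    qed
  qed
qed

lemma final_bound: "real (card (S1 l1 l2)) \<le> (6 / ln 2) * ln (real (l1 + l2) + 2) \<and>
   real (card (S2 l1 l2)) \<le> (6 / ln 2) * ln (real (l1 + l2) + 2)"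
proof -
  define L where "L = l1 + l2"
  define n where "n = floorlog 2 (L+2)"
  have "L + 2 < 2^n" using floorlog_bounds[of "L+2" 2] unfolding n_def by linarith
  then have "l1 + l2 \<le> 2^n" by (simp add: L_def)
  then have c0: "card (S1 l1 l2) \<le> n+1" "card (S2 l1 l2) \<le> 2*n+2" using bound[of n] by blast+
  then have c: "card (S1 l1 l2) \<le> 2*n+2" "card (S2 l1 l2) \<le> 2*n+2" by simp_all
  have ln2: "0 < ln (2::real)" by simp
  have x2: "ln 2 \<le> ln (real L + 2)" by (subst ln_le_cancel_iff) auto
  have lg: "log 2 (real (L+2)) \<ge> 0" by (subst zero_le_log_cancel_iff) auto
  have nn: "n = nat \<lfloor>log 2 (real (L+2))\<rfloor> + 1" unfolding n_def floorlog_def by simp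
  have "real (nat \<lfloor>log 2 (real (L+2))\<rfloor>) \<le> log 2 (real (L+2))" using lg by linarith
  then have "real n \<le> log 2 (real (L+2)) + 1" unfolding nn by simp
  also have "log 2 (real (L+2)) = ln (real L + 2) / ln 2" by (simp add: log_def)
  finally have nb: "real n \<le> ln (real L + 2) / ln 2 + 1" .
  have q: "1 \<le> ln (real L + 2) / ln 2" using x2 ln2 by simp
  have "real (2*n+2) \<le> 2 * (ln (real L + 2) / ln 2) + 4" using nb by simp
  also have "\<dots> \<le> 6 * (ln (real L + 2) / ln 2)" using q by linarith
  also have "\<dots> = (6 / ln 2) * ln (real L + 2)" by simp
  finally have f: "real (2*n+2) \<le> (6 / ln 2) * ln (real L + 2)" .
  have "real (card (S1 l1 l2)) \<le> real (2*n+2)" "real (card (S2 l1 l2)) \<le> real (2*n+2)" using c by simp_all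
  then show ?thesis using f unfolding L_def by simp
qed

theorem lemma2p1:
  shows "\<exists>(\<sigma> :: nat \<Rightarrow> nat \<Rightarrow> nat \<times> nat \<Rightarrow> nat) (C :: real).
     (\<forall>l1 l2. bij_betw (\<sigma> l1 l2) (D l1 l2) {1..l1 + l2}) \<and>
     (\<forall>l1 l2.
        real (card {x \<in> D l1 l2. \<sigma> (l1 + 1) l2 x \<noteq> \<sigma> l1 l2 x})
          \<le> C * ln (real (l1 + l2) + 2) \<and>
        real (card {x \<in> D l1 l2. \<sigma> l1 (l2 + 1) x \<noteq> \<sigma> l1 l2 x})
          \<le> C * ln (real (l1 + l2) + 2))"
proof (rule exI[of _ "\<lambda>l1 l2 x. sg l1 l2 (fst x) (snd x)"], rule exI[of _ "6 / ln 2"], intro conjI allI)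
  fix l1 l2 :: nat
  show "bij_betw ((\<lambda>l1 l2 x. sg l1 l2 (fst x) (snd x)) l1 l2) (D l1 l2) {1..l1 + l2}"
    using bij_sg[of l1 l2] by simp
next
  fix l1 l2 :: nat
  show "real (card {x \<in> D l1 l2. (\<lambda>l1 l2 x. sg l1 l2 (fst x) (snd x)) (l1 + 1) l2 x \<noteq> (\<lambda>l1 l2 x. sg l1 l2 (fst x) (snd x)) l1 l2 x}) \<le> 6 / ln 2 * ln (real (l1 + l2) + 2)"
    using final_bound[of l1 l2] unfolding S1_def by simp
next
  fix l1 l2 :: nat
  show "real (card {x \<in> D l1 l2. (\<lambda>l1 l2 x. sg l1 l2 (fst x) (snd x)) l1 (l2 + 1) x \<noteq> (\<lambda>l1 l2 x. sg l1 l2 (fst x) (snd x)) l1 l2 x}) \<le> 6 / ln 2 * ln (real (l1 + l2) + 2)"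
    using final_bound[of l1 l2] unfolding S2_def by simp
qed

end
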